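(* Let $Y$ be a mean zero random variable with variance $\sigma^2\in(0,\infty)$ and moment generating function $m(s)=\mathbb{E}[e^{sY}]$, and let $Y^*$, defined on the same probability space, have the $Y$-zero biased distribution. If $Y^*-Y\le c$ almost surely for some $c>0$, and $\theta>0$ is such that $m(\theta)$ is finite, then $$m(\theta)\le \exp\left(\frac{\sigma^2}{c^2}\left(e^{c\theta}(c\theta-1)+1\right)\right).$$
   Context: Zero bias distribution: for a mean zero random variable $Y$ with finite positive variance $\sigma^2$, a random variable $Y^*$ is said to have the $Y$-zero biased distribution if $\mathbb{E}[Yf(Y)]=\sigma^2\mathbb{E}[f'(Y^* )]$ for all absolutely continuous functions $f$ for which the expectation of either side exists. *)

theory Defs
  imports "HOL-Probability.Probability"
begin

definition abs_continuous_on :: "real set \<Rightarrow> (real \<Rightarrow> real) \<Rightarrow> bool" where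
  "abs_continuous_on S f \<longleftrightarrow>
     (\<forall>\<epsilon>>0. \<exists>\<delta>>0. \<forall>(n::nat) (a::nat \<Rightarrow> real) (b::nat \<Rightarrow> real).
        (\<forall>i<n. a i \<le> b i \<and> {a i..b i} \<subseteq> S) \<and>
        disjoint_family_on (\<lambda>i. {a i<..<b i}) {..<n} \<and>
        (\<Sum>i<n. b i - a i) < \<delta>
        \<longrightarrow> (\<Sum>i<n. \<bar>f (b i) - f (a i)\<bar>) < \<epsilon>)"

definition abs_continuous :: "(real \<Rightarrow> real) \<Rightarrow> bool" where
  "abs_continuous f \<longleftrightarrow> (\<forall>a b. abs_continuous_on {a..b} f)"

definition zero_biased :: "'a measure \<Rightarrow> real \<Rightarrow> ('a \<Rightarrow> real) \<Rightarrow> ('a \<Rightarrow> real) \<Rightarrow> bool" where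
  "zero_biased M \<sigma>2 Y Ys \<longleftrightarrow>
     (\<forall>f f'. abs_continuous f \<and> f' \<in> borel_measurable borel \<and>
        (AE x in lborel. (f has_real_derivative f' x) (at x)) \<longrightarrow>
        (integrable M (\<lambda>\<omega>. Y \<omega> * f (Y \<omega>)) \<or> integrable M (\<lambda>\<omega>. f' (Ys \<omega>))) \<longrightarrow>
        (integrable M (\<lambda>\<omega>. Y \<omega> * f (Y \<omega>)) \<and> integrable M (\<lambda>\<omega>. f' (Ys \<omega>)) \<and>
         (\<integral>\<omega>. Y \<omega> * f (Y \<omega>) \<partial>M) = \<sigma>2 * (\<integral>\<omega>. f' (Ys \<omega>) \<partial>M)))"

end

theory Submission
  imports Defs
begin

lemma exp_diff_upper: "u \<le> v \<Longrightarrow> exp v - exp u \<le> (v - u) * exp (v::real)"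
proof -
  have "exp u = exp v * exp (u - v)" by (simp add: exp_diff)
  also have "\<dots> \<ge> exp v * (1 + (u - v))" 
    by (intro mult_left_mono exp_ge_add_one_self) auto
  finally show ?thesis by (simp add: algebra_simps)
qed

lemma exp_diff_lower: "exp v - exp u \<ge> (v - u) * exp (u::real)"
proof -
  have "exp v = exp u * exp (v - u)" by (simp add: exp_diff)
  also have "\<dots> \<ge> exp u * (1 + (v - u))" 
    by (intro mult_left_mono exp_ge_add_one_self) auto
  finally show ?thesis by (simp add: algebra_simps)
qed

lemma abs_continuous_exp:
  assumes "s \<ge> 0" shows "abs_continuous (\<lambda>x. exp (s * x))"
  unfolding abs_continuous_def abs_continuous_on_def
proof (intro allI impI)
  fix a b \<epsilon> :: real assume e: "\<epsilon> > 0"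
  define L where "L = s * exp (s * b) + 1"
  have L: "L > 0" using assms by (simp add: L_def add_nonneg_pos)
  have lip: "\<bar>exp (s * y) - exp (s * x)\<bar> \<le> L * (y - x)" if "a \<le> x" "x \<le> y" "y \<le> b" for x y
  proof -
    have sxy: "s * x \<le> s * y" using that assms by (simp add: mult_left_mono)
    have "exp (s*y) - exp (s*x) \<le> (s*y - s*x) * exp (s*y)" by (rule exp_diff_upper[OF sxy])
    also have "\<dots> = s * (y - x) * exp (s*y)" by (simp add: algebra_simps)
    also have "\<dots> \<le> s * (y - x) * exp (s*b)"
      using that assms by (intro mult_left_mono) (auto simp: mult_left_mono)
    also have "\<dots> \<le> L * (y - x)" using that by (simp add: L_def algebra_simps)
    finally show ?thesis using sxy by simp
  qed
  show "\<exists>\<delta>>0. \<forall>(n::nat) (aa::nat \<Rightarrow> real) (bb::nat \<Rightarrow> real).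
        (\<forall>i<n. aa i \<le> bb i \<and> {aa i..bb i} \<subseteq> {a..b}) \<and>
        disjoint_family_on (\<lambda>i. {aa i<..<bb i}) {..<n} \<and>
        (\<Sum>i<n. bb i - aa i) < \<delta>
        \<longrightarrow> (\<Sum>i<n. \<bar>exp (s * bb i) - exp (s * aa i)\<bar>) < \<epsilon>"
  proof (intro exI[of _ "\<epsilon> / L"] conjI allI impI)
    show "\<epsilon> / L > 0" using e L by simp
    fix n :: nat and aa bb :: "nat \<Rightarrow> real"
    assume H: "(\<forall>i<n. aa i \<le> bb i \<and> {aa i..bb i} \<subseteq> {a..b}) \<and>
        disjoint_family_on (\<lambda>i. {aa i<..<bb i}) {..<n} \<and> (\<Sum>i<n. bb i - aa i) < \<epsilon> / L"
    have "(\<Sum>i<n. \<bar>exp (s * bb i) - exp (s * aa i)\<bar>) \<le> (\<Sum>i<n. L * (bb i - aa i))"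
    proof (intro sum_mono)
      fix i assume "i \<in> {..<n}"
      then have "aa i \<le> bb i" "{aa i..bb i} \<subseteq> {a..b}" using H by auto
      then show "\<bar>exp (s * bb i) - exp (s * aa i)\<bar> \<le> L * (bb i - aa i)"
        by (intro lip) auto
    qed
    also have "\<dots> = L * (\<Sum>i<n. bb i - aa i)" by (simp add: sum_distrib_left)
    also have "\<dots> < L * (\<epsilon> / L)" using H L by (intro mult_strict_left_mono) auto
    also have "\<dots> = \<epsilon>" using L by simp
    finally show "(\<Sum>i<n. \<bar>exp (s * bb i) - exp (s * aa i)\<bar>) < \<epsilon>" .
  qed
qed


lemma zbI:
  assumes "zero_biased M \<sigma>2 Y Ys" "abs_continuous f" "f' \<in> borel_measurable borel"
    "AE x in lborel. (f has_real_derivative f' x) (at x)"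
  shows "integrable M (\<lambda>\<omega>. f' (Ys \<omega>)) \<Longrightarrow> integrable M (\<lambda>\<omega>. Y \<omega> * f (Y \<omega>)) \<and>
     (\<integral>\<omega>. Y \<omega> * f (Y \<omega>) \<partial>M) = \<sigma>2 * (\<integral>\<omega>. f' (Ys \<omega>) \<partial>M)"
  using assms(1) unfolding zero_biased_def
  apply (erule_tac x=f in allE, erule_tac x=f' in allE)
  apply (drule mp)
   apply (intro conjI)
     apply (rule assms(2))
    apply (rule assms(3))
   apply (rule assms(4))
  apply (drule mp)
   apply (rule disjI2, assumption)
  apply (elim conjE)
  apply (intro conjI; assumption)
  done

theorem mainTheorem6:
  fixes M :: "'a measure" and Y Ys :: "'a \<Rightarrow> real" and \<sigma>2 c \<theta> :: real
  assumes "prob_space M"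
    and "Y \<in> borel_measurable M" and "Ys \<in> borel_measurable M"
    and "integrable M Y" and "(\<integral>\<omega>. Y \<omega> \<partial>M) = 0"
    and "integrable M (\<lambda>\<omega>. (Y \<omega>)\<^sup>2)" and "\<sigma>2 = (\<integral>\<omega>. (Y \<omega>)\<^sup>2 \<partial>M)" and "\<sigma>2 > 0"
    and "zero_biased M \<sigma>2 Y Ys"
    and "c > 0" and "AE \<omega> in M. Ys \<omega> - Y \<omega> \<le> c"
    and "\<theta> > 0" and "integrable M (\<lambda>\<omega>. exp (\<theta> * Y \<omega>))"
  shows "(\<integral>\<omega>. exp (\<theta> * Y \<omega>) \<partial>M)
           \<le> exp (\<sigma>2 / c\<^sup>2 * (exp (c * \<theta>) * (c * \<theta> - 1) + 1))"
proof -
  interpret prob_space M by fact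
  note Ym = assms(2) and Ysm = assms(3)
  define m where "m s = (\<integral>\<omega>. exp (s * Y \<omega>) \<partial>M)" for s
  define k where "k s = (\<integral>\<omega>. Y \<omega> * exp (s * Y \<omega>) \<partial>M)" for s
  have int_exp: "integrable M (\<lambda>\<omega>. exp (s * Y \<omega>))" if s: "0 \<le> s" "s \<le> \<theta>" for s
  proof (rule Bochner_Integration.integrable_bound[where f="\<lambda>\<omega>. 1 + exp (\<theta> * Y \<omega>)"])
    show "integrable M (\<lambda>\<omega>. 1 + exp (\<theta> * Y \<omega>))" using assms(13) by auto
    show "(\<lambda>\<omega>. exp (s * Y \<omega>)) \<in> borel_measurable M" using Ym by measurable
    show "AE \<omega> in M. norm (exp (s * Y \<omega>)) \<le> norm (1 + exp (\<theta> * Y \<omega>))"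
    proof (intro AE_I2)
      fix \<omega> show "norm (exp (s * Y \<omega>)) \<le> norm (1 + exp (\<theta> * Y \<omega>))"
      proof (cases "Y \<omega> \<ge> 0")
        case True then have "s * Y \<omega> \<le> \<theta> * Y \<omega>" using s by (simp add: mult_right_mono)
        then have "exp (s * Y \<omega>) \<le> exp (\<theta> * Y \<omega>)" by simp
        then show ?thesis by (smt (verit) exp_gt_zero real_norm_def)
      next
        case False then have "s * Y \<omega> \<le> 0" using s by (simp add: mult_nonneg_nonpos)
        then have "exp (s * Y \<omega>) \<le> 1" by simp
        then show ?thesis by (smt (verit) exp_gt_zero real_norm_def)
      qed
    qed
  qed
  have zb: "integrable M (\<lambda>\<omega>. Y \<omega> * exp (s * Y \<omega>)) \<and> integrable M (\<lambda>\<omega>. s * exp (s * Ys \<omega>)) \<and>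
            k s = \<sigma>2 * (\<integral>\<omega>. s * exp (s * Ys \<omega>) \<partial>M)" if s: "0 < s" "s \<le> \<theta>" for s
  proof -
    have ib: "integrable M (\<lambda>\<omega>. s * exp (s * Ys \<omega>))"
    proof (rule Bochner_Integration.integrable_bound[where f="\<lambda>\<omega>. s * exp (s * c) * exp (s * Y \<omega>)"])
      show "integrable M (\<lambda>\<omega>. s * exp (s * c) * exp (s * Y \<omega>))" using int_exp[of s] s by auto
      show "(\<lambda>\<omega>. s * exp (s * Ys \<omega>)) \<in> borel_measurable M" using Ysm by measurable
      show "AE \<omega> in M. norm (s * exp (s * Ys \<omega>)) \<le> norm (s * exp (s * c) * exp (s * Y \<omega>))"
        using assms(11)
      proof eventually_elim
        fix \<omega> assume "Ys \<omega> - Y \<omega> \<le> c"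
        then have "s * Ys \<omega> \<le> s * (c + Y \<omega>)" using s by (intro mult_left_mono) auto
        then have "s * Ys \<omega> \<le> s * c + s * Y \<omega>" by (simp add: algebra_simps)
        then have "exp (s * Ys \<omega>) \<le> exp (s * c) * exp (s * Y \<omega>)" by (simp flip: exp_add)
        then show "norm (s * exp (s * Ys \<omega>)) \<le> norm (s * exp (s * c) * exp (s * Y \<omega>))"
          using s by (simp add: abs_mult mult_left_mono)
      qed
    qed
    have A: "abs_continuous (\<lambda>x. exp (s * x))" using s by (intro abs_continuous_exp) auto
    have B: "(\<lambda>x. s * exp (s * x)) \<in> borel_measurable borel" by measurable
    have C: "AE x in lborel. ((\<lambda>x. exp (s * x)) has_real_derivative s * exp (s * x)) (at x)"
      by (intro AE_I2) (auto intro!: derivative_eq_intros)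
    have Z: "integrable M (\<lambda>\<omega>. Y \<omega> * exp (s * Y \<omega>)) \<and> integrable M (\<lambda>\<omega>. s * exp (s * Ys \<omega>)) \<and>
         (\<integral>\<omega>. Y \<omega> * exp (s * Y \<omega>) \<partial>M) = \<sigma>2 * (\<integral>\<omega>. s * exp (s * Ys \<omega>) \<partial>M)"
      using zbI[OF assms(9) A B C] ib by simp
    then show ?thesis unfolding k_def by blast
  qed
  have int_k: "integrable M (\<lambda>\<omega>. Y \<omega> * exp (s * Y \<omega>))" if "0 \<le> s" "s \<le> \<theta>" for s
    using zb[of s] that assms(4) by (cases "s = 0") auto
  have kbound: "k s \<le> \<sigma>2 * s * exp (c * s) * m s" if s: "0 \<le> s" "s \<le> \<theta>" for s
  proof (cases "s = 0")
    case True then show ?thesis using assms(5) by (simp add: k_def)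
  next
    case False
    then have s': "0 < s" using s by simp
    have "(\<integral>\<omega>. s * exp (s * Ys \<omega>) \<partial>M) \<le> (\<integral>\<omega>. s * exp (s * c) * exp (s * Y \<omega>) \<partial>M)"
    proof (rule integral_mono_AE)
      show "integrable M (\<lambda>\<omega>. s * exp (s * Ys \<omega>))"
        using zb[OF s' s(2)] by blast
      show "integrable M (\<lambda>\<omega>. s * exp (s * c) * exp (s * Y \<omega>))" using int_exp[OF s] by auto
      show "AE \<omega> in M. s * exp (s * Ys \<omega>) \<le> s * exp (s * c) * exp (s * Y \<omega>)"
        using assms(11)
      proof eventually_elim
        fix \<omega> assume "Ys \<omega> - Y \<omega> \<le> c"
        then have "s * Ys \<omega> \<le> s * (c + Y \<omega>)" using s' by (intro mult_left_mono) auto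
        then have "s * Ys \<omega> \<le> s * c + s * Y \<omega>" by (simp add: algebra_simps)
        then have "exp (s * Ys \<omega>) \<le> exp (s * c) * exp (s * Y \<omega>)" by (simp flip: exp_add)
        then show "s * exp (s * Ys \<omega>) \<le> s * exp (s * c) * exp (s * Y \<omega>)"
          using s' by (simp add: mult_left_mono)
      qed
    qed
    also have "\<dots> = s * exp (s * c) * m s" by (simp add: m_def)
    finally show ?thesis using zb[OF s' s(2)] assms(8)
      by (smt (verit) mult.assoc mult.commute mult_left_mono)
  qed
  have sand: "(t - s) * k s \<le> m t - m s \<and> m t - m s \<le> (t - s) * k t"
    if st: "0 \<le> s" "s \<le> t" "t \<le> \<theta>" for s t
  proof -
    have ie: "integrable M (\<lambda>\<omega>. exp (s * Y \<omega>))" "integrable M (\<lambda>\<omega>. exp (t * Y \<omega>))"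
      using int_exp st by auto
    have ik: "integrable M (\<lambda>\<omega>. Y \<omega> * exp (s * Y \<omega>))" "integrable M (\<lambda>\<omega>. Y \<omega> * exp (t * Y \<omega>))"
      using int_k st by auto
    have md: "m t - m s = (\<integral>\<omega>. exp (t * Y \<omega>) - exp (s * Y \<omega>) \<partial>M)"
      unfolding m_def using ie by (simp add: integral_diff)
    have k1: "(t - s) * k s = (\<integral>\<omega>. (t - s) * (Y \<omega> * exp (s * Y \<omega>)) \<partial>M)"
      unfolding k_def by simp
    have k2: "(t - s) * k t = (\<integral>\<omega>. (t - s) * (Y \<omega> * exp (t * Y \<omega>)) \<partial>M)"
      unfolding k_def by simp
    have "(\<integral>\<omega>. (t - s) * (Y \<omega> * exp (s * Y \<omega>)) \<partial>M) \<le> (\<integral>\<omega>. exp (t * Y \<omega>) - exp (s * Y \<omega>) \<partial>M)"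
    proof (rule integral_mono)
      show "integrable M (\<lambda>\<omega>. (t - s) * (Y \<omega> * exp (s * Y \<omega>)))" using ik by auto
      show "integrable M (\<lambda>\<omega>. exp (t * Y \<omega>) - exp (s * Y \<omega>))" using ie by auto
      fix \<omega>
      have "exp (t * Y \<omega>) - exp (s * Y \<omega>) \<ge> (t * Y \<omega> - s * Y \<omega>) * exp (s * Y \<omega>)"
        by (rule exp_diff_lower)
      then show "(t - s) * (Y \<omega> * exp (s * Y \<omega>)) \<le> exp (t * Y \<omega>) - exp (s * Y \<omega>)"
        by (simp add: algebra_simps)
    qed
    moreover have "(\<integral>\<omega>. exp (t * Y \<omega>) - exp (s * Y \<omega>) \<partial>M) \<le> (\<integral>\<omega>. (t - s) * (Y \<omega> * exp (t * Y \<omega>)) \<partial>M)"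
    proof (rule integral_mono)
      show "integrable M (\<lambda>\<omega>. (t - s) * (Y \<omega> * exp (t * Y \<omega>)))" using ik by auto
      show "integrable M (\<lambda>\<omega>. exp (t * Y \<omega>) - exp (s * Y \<omega>))" using ie by auto
      fix \<omega>
      have "exp (s * Y \<omega>) - exp (t * Y \<omega>) \<ge> (s * Y \<omega> - t * Y \<omega>) * exp (t * Y \<omega>)"
        by (rule exp_diff_lower)
      then show "exp (t * Y \<omega>) - exp (s * Y \<omega>) \<le> (t - s) * (Y \<omega> * exp (t * Y \<omega>))"
        by (simp add: algebra_simps)
    qed
    ultimately show ?thesis by (simp only: md k1 k2)
  qed
  have kcont: "continuous_on {0..\<theta>} k"
  proof (rule continuous_on_sequentiallyI)
    fix u :: "nat \<Rightarrow> real" and a assume u: "\<forall>n. u n \<in> {0..\<theta>}" "a \<in> {0..\<theta>}" "u \<longlonglongrightarrow> a"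
    show "(\<lambda>n. k (u n)) \<longlonglongrightarrow> k a" unfolding k_def
    proof (rule integral_dominated_convergence[where w="\<lambda>\<omega>. \<bar>Y \<omega>\<bar> + \<bar>Y \<omega> * exp (\<theta> * Y \<omega>)\<bar>"])
      show "(\<lambda>\<omega>. Y \<omega> * exp (a * Y \<omega>)) \<in> borel_measurable M" using Ym by measurable
      show "(\<lambda>\<omega>. Y \<omega> * exp (u i * Y \<omega>)) \<in> borel_measurable M" for i using Ym by measurable
      show "integrable M (\<lambda>\<omega>. \<bar>Y \<omega>\<bar> + \<bar>Y \<omega> * exp (\<theta> * Y \<omega>)\<bar>)"
        using int_k[of \<theta>] assms(4,12) by auto
      show "AE \<omega> in M. (\<lambda>i. Y \<omega> * exp (u i * Y \<omega>)) \<longlonglongrightarrow> Y \<omega> * exp (a * Y \<omega>)"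
        using u(3) by (intro AE_I2 tendsto_mult_left tendsto_exp tendsto_mult_right)
      show "AE \<omega> in M. norm (Y \<omega> * exp (u i * Y \<omega>)) \<le> \<bar>Y \<omega>\<bar> + \<bar>Y \<omega> * exp (\<theta> * Y \<omega>)\<bar>" for i
      proof (intro AE_I2)
        fix \<omega>
        have s: "0 \<le> u i" "u i \<le> \<theta>" using u(1) by auto
        have "exp (u i * Y \<omega>) \<le> 1 + exp (\<theta> * Y \<omega>)"
        proof (cases "Y \<omega> \<ge> 0")
          case True then have "u i * Y \<omega> \<le> \<theta> * Y \<omega>" using s by (simp add: mult_right_mono)
          then have "exp (u i * Y \<omega>) \<le> exp (\<theta> * Y \<omega>)" by simp
          then show ?thesis by (smt (verit) exp_gt_zero)
        next
          case False then have "u i * Y \<omega> \<le> 0" using s by (simp add: mult_nonneg_nonpos)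
          then have "exp (u i * Y \<omega>) \<le> 1" by simp
          then show ?thesis by (smt (verit) exp_gt_zero)
        qed
        then have "\<bar>Y \<omega>\<bar> * exp (u i * Y \<omega>) \<le> \<bar>Y \<omega>\<bar> * (1 + exp (\<theta> * Y \<omega>))"
          by (intro mult_left_mono) auto
        then show "norm (Y \<omega> * exp (u i * Y \<omega>)) \<le> \<bar>Y \<omega>\<bar> + \<bar>Y \<omega> * exp (\<theta> * Y \<omega>)\<bar>"
          by (simp add: abs_mult algebra_simps)
      qed
    qed
  qed
  have mder: "(m has_real_derivative k s) (at s within {0..\<theta>})" if s: "s \<in> {0..\<theta>}" for s
  proof -
    have kl: "(k \<longlongrightarrow> k s) (at s within {0..\<theta>})"
      using kcont s unfolding continuous_on_def by blast
    have kl0: "((\<lambda>y. \<bar>k y - k s\<bar>) \<longlongrightarrow> 0) (at s within {0..\<theta>})"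
      by (rule tendsto_rabs_zero[OF LIM_zero[OF kl]])
    have ev: "eventually (\<lambda>y. norm ((m y - m s) / (y - s) - k s) \<le> \<bar>k y - k s\<bar>) (at s within {0..\<theta>})"
      unfolding eventually_at_filter
    proof (intro always_eventually allI impI)
      fix y assume y: "y \<noteq> s" "y \<in> {0..\<theta>}"
      show "norm ((m y - m s) / (y - s) - k s) \<le> \<bar>k y - k s\<bar>"
      proof (cases "s < y")
        case True
        then have sd: "(y - s) * k s \<le> m y - m s" "m y - m s \<le> (y - s) * k y"
          using sand[of s y] s y by auto
        have p: "y - s > 0" using True by simp
        have "k s \<le> (m y - m s) / (y - s)" using sd(1) p by (simp add: pos_le_divide_eq mult.commute)
        moreover have "(m y - m s) / (y - s) \<le> k y" using sd(2) p by (simp add: pos_divide_le_eq mult.commute)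
        ultimately show ?thesis by simp
      next
        case False
        then have lt: "y < s" using y by simp
        then have sd: "(s - y) * k y \<le> m s - m y" "m s - m y \<le> (s - y) * k s"
          using sand[of y s] s y by auto
        have p: "s - y > 0" using lt by simp
        have eq: "(m y - m s) / (y - s) = (m s - m y) / (s - y)"
          by (metis minus_diff_eq minus_divide_divide)
        have "k y \<le> (m s - m y) / (s - y)" using sd(1) p by (simp add: pos_le_divide_eq mult.commute)
        moreover have "(m s - m y) / (s - y) \<le> k s" using sd(2) p by (simp add: pos_divide_le_eq mult.commute)
        ultimately show ?thesis using eq by simp
      qed
    qed
    have "((\<lambda>y. (m y - m s) / (y - s) - k s) \<longlongrightarrow> 0) (at s within {0..\<theta>})"
      by (rule Lim_null_comparison[OF ev kl0])
    then have "((\<lambda>y. (m y - m s) / (y - s)) \<longlongrightarrow> k s) (at s within {0..\<theta>})"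
      by (simp add: LIM_zero_iff)
    then show ?thesis by (simp add: has_field_derivative_iff)
  qed
  define G where "G t = \<sigma>2 / c\<^sup>2 * (exp (c * t) * (c * t - 1) + 1)" for t
  have Gder: "(G has_real_derivative \<sigma>2 * t * exp (c * t)) (at t within S)" for t S
    unfolding G_def using assms(10)
    by (auto intro!: derivative_eq_intros simp: field_simps power2_eq_square)
  define F where "F t = m t * exp (- G t)" for t
  have Fder: "(F has_real_derivative (k t - \<sigma>2 * t * exp (c * t) * m t) * exp (- G t)) (at t within {0..\<theta>})"
    if t: "t \<in> {0..\<theta>}" for t
  proof -
    have "(F has_real_derivative k t * exp (- G t) + m t * (exp (- G t) * (- (\<sigma>2 * t * exp (c * t)))))
        (at t within {0..\<theta>})"
      unfolding F_def using mder[OF t] Gder[of t "{0..\<theta>}"] by (auto intro!: derivative_eq_intros)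
    then show ?thesis by (simp add: algebra_simps)
  qed
  have "F \<theta> \<le> F 0"
  proof (rule DERIV_nonpos_imp_decreasing_open[where f=F and a=0 and b=\<theta>])
    show "0 \<le> \<theta>" using assms(12) by simp
    show "continuous_on {0..\<theta>} F"
      unfolding continuous_on_eq_continuous_within
      using Fder DERIV_continuous by blast
    fix x assume x: "0 < x" "x < \<theta>"
    have "(F has_real_derivative (k x - \<sigma>2 * x * exp (c * x) * m x) * exp (- G x)) (at x)"
      using Fder[of x] x by (simp add: at_within_Icc_at)
    moreover have "(k x - \<sigma>2 * x * exp (c * x) * m x) * exp (- G x) \<le> 0"
      using kbound[of x] x by (intro mult_nonpos_nonneg) (auto simp: mult.assoc mult.commute)
    ultimately show "\<exists>y. (F has_real_derivative y) (at x) \<and> y \<le> 0" by blast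
  qed
  moreover have "F 0 = 1" unfolding F_def G_def m_def by (simp add: prob_space)
  ultimately have "m \<theta> * exp (- G \<theta>) \<le> 1" unfolding F_def by simp
  then have "m \<theta> \<le> exp (G \<theta>)" by (simp add: exp_minus field_simps)
  then show ?thesis unfolding m_def G_def .
qed

end
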